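(* Let $X_1,\dots,X_n$ be mutually independent random variables with product distribution $\mu$ and let $A_1,\dots,A_m$ be events, $A_i$ determined by the variables indexed by $\mathrm{vbl}(A_i)\subseteq[n]$. Let $G$ be the dependency graph on $[m]$ (distinct $i,j$ adjacent iff $\mathrm{vbl}(A_i)\cap\mathrm{vbl}(A_j)\neq\emptyset$), $\Gamma^+(S)$ the union of $S\subseteq[m]$ with its neighbours, and $\mathcal{I}$ the collection of independent sets of $G$. Assume $\Pr_\mu(A_i\wedge A_j)=0$ whenever $i,j$ are adjacent. Let $p_i=\Pr_\mu(A_i)$, and for $I\in\mathcal I$ let $$q_I=\sum_{J\in\mathcal{I},\,I\subseteq J}(-1)^{|J|-|I|}\prod_{i\in J}p_i .$$ For an independent set sequence $\mathcal S=(S_1,\dots,S_\ell)$ let $p_{\mathcal S}=\prod_{t=1}^{\ell}\prod_{i\in S_t}p_i$. Run the algorithm: draw all variables independently; in round $t=1,2,\dots$, let $I_t$ be the set of indices of events occurring under the current assignment; if $I_t=\emptyset$ stop, otherwise independently resample all variables in $\bigcup_{i\in I_t}\mathrm{vbl}(A_i)$. Let $I\in\mathcal I$ and let $\mathcal S=(S_1,\dots,S_\ell)$, $\ell\ge1$, be an independent set sequence with $I\subseteq\Gamma^+(S_\ell)$. Then $$\Pr\big(I_t=S_t\text{ for all }1\le t\le \ell\text{ and } I_{\ell+1}=I\big)=q_I\,p_{\mathcal S}.$$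
   Context: An independent set sequence is a sequence $S_1,\dots,S_\ell$ of nonempty independent sets of $G$ with $S_{t+1}\subseteq\Gamma^+(S_t)$ for all $1\le t\le\ell-1$. *)

theory Defs
  imports "HOL-Probability.Probability"
begin

text \<open>Variables are indexed by {..<n}, events by {..<m}. An assignment is an
element of the product space PiM {..<n} M. vbl i is the set of variables event i
depends on.\<close>

definition adj :: "(nat \<Rightarrow> nat set) \<Rightarrow> nat \<Rightarrow> nat \<Rightarrow> bool" where
  "adj vbl i j \<longleftrightarrow> i \<noteq> j \<and> vbl i \<inter> vbl j \<noteq> {}"

definition indep_set :: "nat \<Rightarrow> (nat \<Rightarrow> nat set) \<Rightarrow> nat set \<Rightarrow> bool" where
  "indep_set m vbl J \<longleftrightarrow> J \<subseteq> {..<m} \<and> (\<forall>i\<in>J. \<forall>j\<in>J. \<not> adj vbl i j)"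

definition Gamma_plus :: "nat \<Rightarrow> (nat \<Rightarrow> nat set) \<Rightarrow> nat set \<Rightarrow> nat set" where
  "Gamma_plus m vbl S = S \<union> {j. j < m \<and> (\<exists>i\<in>S. adj vbl i j)}"

fun indep_set_seq :: "nat \<Rightarrow> (nat \<Rightarrow> nat set) \<Rightarrow> nat set list \<Rightarrow> bool" where
  "indep_set_seq m vbl [] = True"
| "indep_set_seq m vbl [S] = (S \<noteq> {} \<and> indep_set m vbl S)"
| "indep_set_seq m vbl (S # T # Ss) =
     (S \<noteq> {} \<and> indep_set m vbl S \<and> T \<subseteq> Gamma_plus m vbl S \<and> indep_set_seq m vbl (T # Ss))"

definition q_coef :: "nat \<Rightarrow> (nat \<Rightarrow> nat set) \<Rightarrow> (nat \<Rightarrow> real) \<Rightarrow> nat set \<Rightarrow> real" where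
  "q_coef m vbl p I =
     (\<Sum>J\<in>{J. indep_set m vbl J \<and> I \<subseteq> J}. (-1) ^ (card J - card I) * (\<Prod>i\<in>J. p i))"

definition p_seq :: "(nat \<Rightarrow> real) \<Rightarrow> nat set list \<Rightarrow> real" where
  "p_seq p Ss = (\<Prod>S\<leftarrow>Ss. \<Prod>i\<in>S. p i)"

definition occurring :: "nat \<Rightarrow> (nat \<Rightarrow> ('b set)) \<Rightarrow> 'b \<Rightarrow> nat set" where
  "occurring m A \<sigma> = {i. i < m \<and> \<sigma> \<in> A i}"

definition resample :: "(nat \<Rightarrow> 'a) \<Rightarrow> nat set \<Rightarrow> (nat \<Rightarrow> 'a) \<Rightarrow> (nat \<Rightarrow> 'a)" where
  "resample \<sigma> T \<tau> = (\<lambda>k. if k \<in> T then \<tau> k else \<sigma> k)"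

text \<open>In each round where the occurring set is S,
all variables in the union of vbl i over i in S are resampled independently from
mu (only those coordinates of the fresh sample are used).\<close>
primrec traj :: "(nat \<Rightarrow> 'a) measure \<Rightarrow> nat \<Rightarrow> (nat \<Rightarrow> (nat \<Rightarrow> 'a) set) \<Rightarrow> (nat \<Rightarrow> nat set)
                 \<Rightarrow> (nat \<Rightarrow> 'a) \<Rightarrow> nat set list \<Rightarrow> nat set \<Rightarrow> ennreal" where
  "traj \<mu> m A vbl \<sigma> [] I = (if occurring m A \<sigma> = I then 1 else 0)"
| "traj \<mu> m A vbl \<sigma> (S # Ss) I =
     (if occurring m A \<sigma> = S
      then \<integral>\<^sup>+ \<tau>. traj \<mu> m A vbl (resample \<sigma> (\<Union>i\<in>S. vbl i) \<tau>) Ss I \<partial>\<mu>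
      else 0)"

definition run_prob :: "(nat \<Rightarrow> 'a) measure \<Rightarrow> nat \<Rightarrow> (nat \<Rightarrow> (nat \<Rightarrow> 'a) set) \<Rightarrow> (nat \<Rightarrow> nat set)
                 \<Rightarrow> nat set list \<Rightarrow> nat set \<Rightarrow> real" where
  "run_prob \<mu> m A vbl Ss I = enn2real (\<integral>\<^sup>+ \<sigma>. traj \<mu> m A vbl \<sigma> Ss I \<partial>\<mu>)"

end

theory Submission
  imports Defs
begin


locale LLL = finite_product_prob_space M K for M :: "nat \<Rightarrow> 'a measure" and K :: "nat set"
begin

abbreviation "\<mu> \<equiv> PiM K M"

lemma P: "prob_space \<mu>" by unfold_locales

lemma SF: "sigma_finite_measure \<mu>" by unfold_locales

lemma resample_meas: "(\<lambda>x. resample (fst x) V (snd x)) \<in> measurable (\<mu> \<Otimes>\<^sub>M \<mu>) \<mu>"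
proof -
  have "(\<lambda>\<omega> k. (\<lambda>k \<omega>. if k \<in> V then snd \<omega> k else fst \<omega> k) k \<omega>) \<in> measurable (\<mu> \<Otimes>\<^sub>M \<mu>) \<mu>"
  proof (rule measurable_PiM_single')
    fix i assume "i \<in> K"
    then show "(\<lambda>\<omega>. if i \<in> V then snd \<omega> i else fst \<omega> i) \<in> measurable (\<mu> \<Otimes>\<^sub>M \<mu>) (M i)"
      by measurable
  next
    show "(\<lambda>\<omega> k. if k \<in> V then snd \<omega> k else fst \<omega> k) \<in> space (\<mu> \<Otimes>\<^sub>M \<mu>) \<rightarrow> (\<Pi>\<^sub>E i\<in>K. space (M i))"
      by (auto simp: space_pair_measure space_PiM PiE_iff extensional_def)
  qed
  then show ?thesis by (simp add: resample_def)
qed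

lemma resample_space: "\<sigma> \<in> space \<mu> \<Longrightarrow> \<tau> \<in> space \<mu> \<Longrightarrow> resample \<sigma> V \<tau> \<in> space \<mu>"
  by (auto simp: resample_def space_PiM PiE_iff extensional_def)

lemma resample_distr: "distr (\<mu> \<Otimes>\<^sub>M \<mu>) \<mu> (\<lambda>x. resample (fst x) V (snd x)) = \<mu>"
proof (rule PiM_eqI)
  show "finite K" by (rule finite_index)
  show "sets (distr (\<mu> \<Otimes>\<^sub>M \<mu>) \<mu> (\<lambda>x. resample (fst x) V (snd x))) = sets \<mu>" by simp
  fix B assume B: "\<And>i. i \<in> K \<Longrightarrow> B i \<in> sets (M i)"
  define B1 where "B1 k = (if k \<in> V then space (M k) else B k)" for k
  define B2 where "B2 k = (if k \<in> V then B k else space (M k))" for k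
  have BS: "\<And>i. i \<in> K \<Longrightarrow> B i \<subseteq> space (M i)" using B sets.sets_into_space by blast
  have "(\<lambda>x. resample (fst x) V (snd x)) -` (Pi\<^sub>E K B) \<inter> space (\<mu> \<Otimes>\<^sub>M \<mu>) = Pi\<^sub>E K B1 \<times> Pi\<^sub>E K B2"
    using BS by (auto simp: resample_def space_pair_measure space_PiM PiE_iff extensional_def B1_def B2_def split: if_splits; blast)
  moreover have "Pi\<^sub>E K B \<in> sets \<mu>" using B by (auto intro!: sets_PiM_I_finite finite_index)
  moreover have "Pi\<^sub>E K B1 \<in> sets \<mu>" "Pi\<^sub>E K B2 \<in> sets \<mu>" using B
    by (auto intro!: sets_PiM_I_finite finite_index simp: B1_def B2_def)
  ultimately have "emeasure (distr (\<mu> \<Otimes>\<^sub>M \<mu>) \<mu> (\<lambda>x. resample (fst x) V (snd x))) (Pi\<^sub>E K B)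
     = emeasure \<mu> (Pi\<^sub>E K B1) * emeasure \<mu> (Pi\<^sub>E K B2)"
    using resample_meas by (simp add: emeasure_distr sigma_finite_measure.emeasure_pair_measure_Times[OF SF])
  also have "\<dots> = (\<Prod>i\<in>K. emeasure (M i) (B1 i)) * (\<Prod>i\<in>K. emeasure (M i) (B2 i))"
    using B by (simp add: emeasure_PiM finite_index B1_def B2_def)
  also have "\<dots> = (\<Prod>i\<in>K. emeasure (M i) (B1 i) * emeasure (M i) (B2 i))"
    by (simp add: prod.distrib)
  also have "\<dots> = (\<Prod>i\<in>K. emeasure (M i) (B i))"
    by (rule prod.cong) (auto simp: B1_def B2_def M.emeasure_space_1)
  finally show "emeasure (distr (\<mu> \<Otimes>\<^sub>M \<mu>) \<mu> (\<lambda>x. resample (fst x) V (snd x))) (Pi\<^sub>E K B) = (\<Prod>i\<in>K. emeasure (M i) (B i))" .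
qed

lemma split_indep:
  assumes f[measurable]: "f \<in> borel_measurable \<mu>" and g[measurable]: "g \<in> borel_measurable \<mu>"
  and fV: "\<And>\<sigma> \<sigma>'. \<sigma> \<in> space \<mu> \<Longrightarrow> \<sigma>' \<in> space \<mu> \<Longrightarrow> (\<forall>k\<in>V. \<sigma> k = \<sigma>' k) \<Longrightarrow> f \<sigma> = f \<sigma>'"
  and gV: "\<And>\<sigma> \<sigma>'. \<sigma> \<in> space \<mu> \<Longrightarrow> \<sigma>' \<in> space \<mu> \<Longrightarrow> (\<forall>k. k \<notin> V \<longrightarrow> \<sigma> k = \<sigma>' k) \<Longrightarrow> g \<sigma> = g \<sigma>'"
  shows "(\<integral>\<^sup>+\<sigma>. f \<sigma> * g \<sigma> \<partial>\<mu>) = (\<integral>\<^sup>+\<sigma>. f \<sigma> \<partial>\<mu>) * (\<integral>\<^sup>+\<sigma>. g \<sigma> \<partial>\<mu>)"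
proof -
  let ?R = "\<lambda>x. resample (fst x) V (snd x)"
  have R[measurable]: "?R \<in> measurable (\<mu> \<Otimes>\<^sub>M \<mu>) \<mu>" by (rule resample_meas)
  have "(\<integral>\<^sup>+\<sigma>. f \<sigma> * g \<sigma> \<partial>\<mu>) = (\<integral>\<^sup>+\<sigma>. f \<sigma> * g \<sigma> \<partial>distr (\<mu> \<Otimes>\<^sub>M \<mu>) \<mu> ?R)"
    by (simp add: resample_distr)
  also have "\<dots> = (\<integral>\<^sup>+x. f (?R x) * g (?R x) \<partial>(\<mu> \<Otimes>\<^sub>M \<mu>))"
    by (rule nn_integral_distr) (rule R, measurable)
  also have "\<dots> = (\<integral>\<^sup>+x. g (fst x) * f (snd x) \<partial>(\<mu> \<Otimes>\<^sub>M \<mu>))"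
  proof (rule nn_integral_cong)
    fix x assume x: "x \<in> space (\<mu> \<Otimes>\<^sub>M \<mu>)"
    then have s: "fst x \<in> space \<mu>" "snd x \<in> space \<mu>" by (auto simp: space_pair_measure)
    then have r: "?R x \<in> space \<mu>" by (rule resample_space)
    have "f (?R x) = f (snd x)" by (rule fV[OF r s(2)]) (simp add: resample_def)
    moreover have "g (?R x) = g (fst x)" by (rule gV[OF r s(1)]) (simp add: resample_def)
    ultimately show "f (?R x) * g (?R x) = g (fst x) * f (snd x)" by (simp add: mult.commute)
  qed
  also have "\<dots> = (\<integral>\<^sup>+\<sigma>. \<integral>\<^sup>+\<tau>. g \<sigma> * f \<tau> \<partial>\<mu> \<partial>\<mu>)"
    by (rule sigma_finite_measure.nn_integral_fst[OF SF, symmetric, where f="\<lambda>x. g (fst x) * f (snd x)", simplified]) measurable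
  also have "\<dots> = (\<integral>\<^sup>+\<sigma>. g \<sigma> * (\<integral>\<^sup>+\<tau>. f \<tau> \<partial>\<mu>) \<partial>\<mu>)"
    by (rule nn_integral_cong) (rule nn_integral_cmult, simp)
  also have "\<dots> = (\<integral>\<^sup>+\<sigma>. g \<sigma> \<partial>\<mu>) * (\<integral>\<^sup>+\<tau>. f \<tau> \<partial>\<mu>)"
    by (rule nn_integral_multc) simp
  finally show ?thesis by (simp add: mult.commute)
qed

end



locale LLL2 = LLL M K for M :: "nat \<Rightarrow> 'a measure" and K :: "nat set" +
  fixes m :: nat and A :: "nat \<Rightarrow> (nat \<Rightarrow> 'a) set" and vbl :: "nat \<Rightarrow> nat set"
  assumes A_meas: "\<And>i. i < m \<Longrightarrow> A i \<in> sets (PiM K M)"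
    and vbl_sub: "\<And>i. i < m \<Longrightarrow> vbl i \<subseteq> K"
    and A_det: "\<And>i \<sigma> \<tau>. i < m \<Longrightarrow> \<sigma> \<in> space (PiM K M) \<Longrightarrow> \<tau> \<in> space (PiM K M) \<Longrightarrow>
                   (\<forall>k\<in>vbl i. \<sigma> k = \<tau> k) \<Longrightarrow> (\<sigma> \<in> A i \<longleftrightarrow> \<tau> \<in> A i)"
    and disj: "\<And>i j. i < m \<Longrightarrow> j < m \<Longrightarrow> adj vbl i j \<Longrightarrow> measure (PiM K M) (A i \<inter> A j) = 0"
begin

lemma occ_sets: "{\<sigma> \<in> space \<mu>. occurring m A \<sigma> = S} \<in> sets \<mu>"
proof (cases "S \<subseteq> {..<m}")
  case True
  have "{\<sigma> \<in> space \<mu>. occurring m A \<sigma> = S} = {\<sigma> \<in> space \<mu>. \<forall>i\<in>{..<m}. (\<sigma> \<in> A i \<longleftrightarrow> i \<in> S)}"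
    using True by (auto simp: occurring_def)
  also have "\<dots> \<in> sets \<mu>"
  proof (rule sets.sets_Collect_finite_All)
    fix i assume i: "i \<in> {..<m}"
    show "{\<sigma> \<in> space \<mu>. (\<sigma> \<in> A i \<longleftrightarrow> i \<in> S)} \<in> sets \<mu>"
    proof (cases "i \<in> S")
      case True
      then have "{\<sigma> \<in> space \<mu>. (\<sigma> \<in> A i \<longleftrightarrow> i \<in> S)} = A i"
        using sets.sets_into_space[OF A_meas] i by auto
      then show ?thesis using A_meas i by simp
    next
      case False
      then have "{\<sigma> \<in> space \<mu>. (\<sigma> \<in> A i \<longleftrightarrow> i \<in> S)} = space \<mu> - A i" by auto
      then show ?thesis using A_meas i by auto
    qed
  qed simp
  finally show ?thesis .
next
  case False
  then have "{\<sigma> \<in> space \<mu>. occurring m A \<sigma> = S} = {}" by (auto simp: occurring_def)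
  then show ?thesis by (metis sets.empty_sets)
qed

lemma traj_meas: "(\<lambda>\<sigma>. traj \<mu> m A vbl \<sigma> Ss I) \<in> borel_measurable \<mu>"
proof (induction Ss)
  case Nil
  show ?case by (simp, rule measurable_If, auto intro: occ_sets)
next
  case (Cons S Ss)
  have "(\<lambda>x. traj \<mu> m A vbl (resample (fst x) (\<Union>i\<in>S. vbl i) (snd x)) Ss I) \<in> borel_measurable (\<mu> \<Otimes>\<^sub>M \<mu>)"
    using measurable_comp[OF resample_meas Cons.IH] by (simp add: comp_def)
  then have "(\<lambda>\<sigma>. \<integral>\<^sup>+\<tau>. traj \<mu> m A vbl (resample \<sigma> (\<Union>i\<in>S. vbl i) \<tau>) Ss I \<partial>\<mu>) \<in> borel_measurable \<mu>"
    using sigma_finite_measure.borel_measurable_nn_integral_fst[OF SF] by fastforce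
  then show ?case by (simp, rule measurable_If, auto intro: occ_sets)
qed

lemma G_meas: "(\<lambda>\<sigma>. \<integral>\<^sup>+\<tau>. traj \<mu> m A vbl (resample \<sigma> V \<tau>) Ss I \<partial>\<mu>) \<in> borel_measurable \<mu>"
proof -
  have "(\<lambda>x. traj \<mu> m A vbl (resample (fst x) V (snd x)) Ss I) \<in> borel_measurable (\<mu> \<Otimes>\<^sub>M \<mu>)"
    using measurable_comp[OF resample_meas traj_meas] by (simp add: comp_def)
  then show ?thesis
    using sigma_finite_measure.borel_measurable_nn_integral_fst[OF SF] by fastforce
qed

definition AS :: "nat set \<Rightarrow> (nat \<Rightarrow> 'a) set" where
  "AS J = {\<sigma> \<in> space \<mu>. \<forall>i\<in>J. \<sigma> \<in> A i}"

lemma indep_sub: "Defs.indep_set m vbl J \<Longrightarrow> J' \<subseteq> J \<Longrightarrow> Defs.indep_set m vbl J'"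
  by (auto simp: Defs.indep_set_def)

lemma indep_disj: "Defs.indep_set m vbl J \<Longrightarrow> i \<in> J \<Longrightarrow> j \<in> J \<Longrightarrow> i \<noteq> j \<Longrightarrow> vbl i \<inter> vbl j = {}"
  by (auto simp: Defs.indep_set_def adj_def)

lemma AS_sets: "J \<subseteq> {..<m} \<Longrightarrow> AS J \<in> sets \<mu>"
  unfolding AS_def
proof (rule sets.sets_Collect_finite_All)
  fix i assume "J \<subseteq> {..<m}" "i \<in> J"
  then have "{\<sigma> \<in> space \<mu>. \<sigma> \<in> A i} = A i" using sets.sets_into_space[OF A_meas, of i] by auto
  then show "{\<sigma> \<in> space \<mu>. \<sigma> \<in> A i} \<in> sets \<mu>" using A_meas \<open>J \<subseteq> {..<m}\<close> \<open>i \<in> J\<close> by auto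
next
  assume "J \<subseteq> {..<m}" then show "finite J" by (rule finite_subset) simp
qed

lemma AS_prod:
  assumes "Defs.indep_set m vbl J"
  shows "emeasure \<mu> (AS J) = (\<Prod>i\<in>J. emeasure \<mu> (A i))"
proof -
  have "finite J" using assms by (auto simp: Defs.indep_set_def intro: finite_subset)
  then show ?thesis using assms
  proof (induction J rule: finite_induct)
    case empty
    have "AS {} = space \<mu>" by (simp add: AS_def)
    then show ?case by (simp add: P.emeasure_space_1)
  next
    case (insert i J)
    have im: "i < m" using insert.prems by (auto simp: Defs.indep_set_def)
    have Jind: "Defs.indep_set m vbl J" using insert.prems by (rule indep_sub) auto
    have Jm: "J \<subseteq> {..<m}" using Jind by (simp add: Defs.indep_set_def)
    have eq: "AS (insert i J) = A i \<inter> AS J" using sets.sets_into_space[OF A_meas[OF im]]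
      by (auto simp: AS_def)
    have "emeasure \<mu> (A i \<inter> AS J) = (\<integral>\<^sup>+\<sigma>. indicator (A i) \<sigma> * indicator (AS J) \<sigma> \<partial>\<mu>)"
      using A_meas[OF im] AS_sets[OF Jm]
      by (simp add: nn_integral_indicator[symmetric] indicator_inter_arith)
    also have "\<dots> = (\<integral>\<^sup>+\<sigma>. indicator (A i) \<sigma> \<partial>\<mu>) * (\<integral>\<^sup>+\<sigma>. indicator (AS J) \<sigma> \<partial>\<mu>)"
    proof (rule split_indep[where V="vbl i"])
      show "indicator (A i) \<in> borel_measurable \<mu>" using A_meas[OF im] by simp
      show "indicator (AS J) \<in> borel_measurable \<mu>" using AS_sets[OF Jm] by simp
      fix \<sigma> \<sigma>' assume s: "\<sigma> \<in> space \<mu>" "\<sigma>' \<in> space \<mu>"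
      {
        assume "\<forall>k\<in>vbl i. \<sigma> k = \<sigma>' k"
        then have "\<sigma> \<in> A i \<longleftrightarrow> \<sigma>' \<in> A i" using A_det[OF im s] by blast
        then show "indicator (A i) \<sigma> = (indicator (A i) \<sigma>' :: ennreal)" by (simp add: indicator_def)
      next
        assume ag: "\<forall>k. k \<notin> vbl i \<longrightarrow> \<sigma> k = \<sigma>' k"
        have "\<forall>j\<in>J. (\<sigma> \<in> A j \<longleftrightarrow> \<sigma>' \<in> A j)"
        proof
          fix j assume j: "j \<in> J"
          have "vbl i \<inter> vbl j = {}" using indep_disj[OF insert.prems, of i j] j insert.hyps by auto
          then have "\<forall>k\<in>vbl j. \<sigma> k = \<sigma>' k" using ag by blast
          then show "\<sigma> \<in> A j \<longleftrightarrow> \<sigma>' \<in> A j" using A_det[OF _ s] j Jm by blast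
        qed
        then have "\<sigma> \<in> AS J \<longleftrightarrow> \<sigma>' \<in> AS J" using s by (auto simp: AS_def)
        then show "indicator (AS J) \<sigma> = (indicator (AS J) \<sigma>' :: ennreal)" by (simp add: indicator_def)
      }
    qed
    also have "\<dots> = emeasure \<mu> (A i) * emeasure \<mu> (AS J)"
      using A_meas[OF im] AS_sets[OF Jm] by simp
    finally show ?case using eq insert.IH[OF Jind] insert.hyps by simp
  qed
qed

lemma AS_null:
  assumes "J \<subseteq> {..<m}" "\<not> Defs.indep_set m vbl J"
  shows "emeasure \<mu> (AS J) = 0"
proof -
  obtain i j where ij: "i \<in> J" "j \<in> J" "adj vbl i j" using assms by (auto simp: Defs.indep_set_def)
  then have im: "i < m" "j < m" using assms by auto
  have "AS J \<subseteq> A i \<inter> A j" using ij by (auto simp: AS_def)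
  then have "emeasure \<mu> (AS J) \<le> emeasure \<mu> (A i \<inter> A j)"
    using A_meas im by (intro emeasure_mono) auto
  also have "\<dots> = 0" using disj[OF im ij(3)] A_meas im by (simp add: P.emeasure_eq_measure)
  finally show ?thesis by simp
qed

end



context LLL2 begin

definition NS :: "nat set \<Rightarrow> (nat \<Rightarrow> 'a) set" where
  "NS T = {\<sigma> \<in> space \<mu>. \<forall>j\<in>{..<m}. j \<notin> T \<longrightarrow> \<sigma> \<notin> A j}"

lemma NS_sets: "NS T \<in> sets \<mu>"
  unfolding NS_def
proof (rule sets.sets_Collect_finite_All)
  fix j assume j: "j \<in> {..<m}"
  show "{\<sigma> \<in> space \<mu>. j \<notin> T \<longrightarrow> \<sigma> \<notin> A j} \<in> sets \<mu>"
  proof (cases "j \<in> T")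
    case True then show ?thesis by simp
  next
    case False
    then have "{\<sigma> \<in> space \<mu>. j \<notin> T \<longrightarrow> \<sigma> \<notin> A j} = space \<mu> - A j" by auto
    then show ?thesis using A_meas j by auto
  qed
qed simp

definition Z :: "(nat \<Rightarrow> 'a) set" where
  "Z = (\<Union>i\<in>{..<m}. \<Union>j\<in>{j. j < m \<and> adj vbl i j}. A i \<inter> A j)"

lemma Z_null: "Z \<in> null_sets \<mu>"
  unfolding Z_def
proof (rule null_sets_UN')
  fix i assume i: "i \<in> {..<m}"
  show "(\<Union>j\<in>{j. j < m \<and> adj vbl i j}. A i \<inter> A j) \<in> null_sets \<mu>"
  proof (rule null_sets_UN')
    fix j assume j: "j \<in> {j. j < m \<and> adj vbl i j}"
    then show "A i \<inter> A j \<in> null_sets \<mu>"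
      using i disj[of i j] A_meas[of i] A_meas[of j]
      by (auto simp: null_sets_def P.emeasure_eq_measure)
  qed (rule countable_finite, simp)
qed (rule countable_finite, simp)

lemma p_seq_nonneg: "p_seq (\<lambda>i. measure \<mu> (A i)) Ss \<ge> 0"
  by (induction Ss) (auto simp: p_seq_def intro!: prod_nonneg mult_nonneg_nonneg)

lemma main:
  assumes "indep_set_seq m vbl Ss" "Defs.indep_set m vbl I"
    "case Ss of [] \<Rightarrow> I \<subseteq> T | S # _ \<Rightarrow> S \<subseteq> T"
    "Ss \<noteq> [] \<longrightarrow> I \<subseteq> Gamma_plus m vbl (last Ss)"
  shows "(\<integral>\<^sup>+\<sigma>. indicator (NS T) \<sigma> * traj \<mu> m A vbl \<sigma> Ss I \<partial>\<mu>)
       = ennreal (p_seq (\<lambda>i. measure \<mu> (A i)) Ss) * emeasure \<mu> {\<sigma> \<in> space \<mu>. occurring m A \<sigma> = I}"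
  using assms
proof (induction Ss arbitrary: T)
  case Nil
  have "(\<integral>\<^sup>+\<sigma>. indicator (NS T) \<sigma> * traj \<mu> m A vbl \<sigma> [] I \<partial>\<mu>)
      = (\<integral>\<^sup>+\<sigma>. indicator {\<sigma> \<in> space \<mu>. occurring m A \<sigma> = I} \<sigma> \<partial>\<mu>)"
  proof (rule nn_integral_cong)
    fix \<sigma> assume s: "\<sigma> \<in> space \<mu>"
    have "occurring m A \<sigma> = I \<Longrightarrow> \<sigma> \<in> NS T" using Nil.prems(3) s
      by (auto simp: NS_def occurring_def)
    then show "indicator (NS T) \<sigma> * traj \<mu> m A vbl \<sigma> [] I = indicator {\<sigma> \<in> space \<mu>. occurring m A \<sigma> = I} \<sigma>"
      using s by (auto simp: indicator_def)
  qed
  also have "\<dots> = emeasure \<mu> {\<sigma> \<in> space \<mu>. occurring m A \<sigma> = I}"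
    using occ_sets by simp
  finally show ?case by (simp add: p_seq_def)
next
  case (Cons S Ss)
  have Sind: "Defs.indep_set m vbl S" and Sne: "S \<noteq> {}" and seq: "indep_set_seq m vbl Ss"
    and c3: "case Ss of [] \<Rightarrow> I \<subseteq> Gamma_plus m vbl S | S2 # _ \<Rightarrow> S2 \<subseteq> Gamma_plus m vbl S"
    and c4: "Ss \<noteq> [] \<longrightarrow> I \<subseteq> Gamma_plus m vbl (last Ss)"
    using Cons.prems by (cases Ss; auto)+
  have ST: "S \<subseteq> T" using Cons.prems(3) by simp
  have Sm: "S \<subseteq> {..<m}" using Sind by (simp add: Defs.indep_set_def)
  define V where "V = (\<Union>i\<in>S. vbl i)"
  define T' where "T' = Gamma_plus m vbl S"
  define G where "G \<sigma> = (\<integral>\<^sup>+\<tau>. traj \<mu> m A vbl (resample \<sigma> V \<tau>) Ss I \<partial>\<mu>)" for \<sigma>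
  have Gm: "G \<in> borel_measurable \<mu>" unfolding G_def by (rule G_meas)
  have traj_eq: "traj \<mu> m A vbl \<sigma> (S # Ss) I = (if occurring m A \<sigma> = S then G \<sigma> else 0)" for \<sigma>
    by (simp add: G_def V_def)
  have ST': "S \<subseteq> T'" by (auto simp: T'_def Gamma_plus_def)
  have outV: "vbl j \<inter> V = {}" if "j < m" "j \<notin> T'" for j
  proof -
    have "vbl i \<inter> vbl j = {}" if i: "i \<in> S" for i
    proof -
      have "j \<notin> S" using \<open>j \<notin> T'\<close> ST' by auto
      then have "i \<noteq> j" using i by auto
      moreover have "\<not> adj vbl i j" using \<open>j \<notin> T'\<close> \<open>j < m\<close> i by (auto simp: T'_def Gamma_plus_def)
      ultimately show ?thesis by (simp add: adj_def)
    qed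
    then show ?thesis by (auto simp: V_def)
  qed
  have Ndep: "indicator (NS T') \<sigma> = (indicator (NS T') \<sigma>' :: ennreal)"
    if s: "\<sigma> \<in> space \<mu>" "\<sigma>' \<in> space \<mu>" and ag: "\<forall>k. k \<notin> V \<longrightarrow> \<sigma> k = \<sigma>' k" for \<sigma> \<sigma>'
  proof -
    have "\<forall>j\<in>{..<m}. j \<notin> T' \<longrightarrow> (\<sigma> \<in> A j \<longleftrightarrow> \<sigma>' \<in> A j)"
    proof (intro ballI impI)
      fix j assume j: "j \<in> {..<m}" "j \<notin> T'"
      then have "\<forall>k\<in>vbl j. \<sigma> k = \<sigma>' k" using outV[of j] ag by auto
      then show "\<sigma> \<in> A j \<longleftrightarrow> \<sigma>' \<in> A j" using A_det[OF _ s] j by auto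
    qed
    then have "\<sigma> \<in> NS T' \<longleftrightarrow> \<sigma>' \<in> NS T'" using s by (auto simp: NS_def)
    then show ?thesis by (simp add: indicator_def)
  qed
  have step1: "(\<integral>\<^sup>+\<sigma>. indicator (NS T) \<sigma> * traj \<mu> m A vbl \<sigma> (S # Ss) I \<partial>\<mu>)
      = (\<integral>\<^sup>+\<sigma>. indicator (AS S) \<sigma> * (indicator (NS T') \<sigma> * G \<sigma>) \<partial>\<mu>)"
  proof (rule nn_integral_cong_AE)
    show "AE \<sigma> in \<mu>. indicator (NS T) \<sigma> * traj \<mu> m A vbl \<sigma> (S # Ss) I = indicator (AS S) \<sigma> * (indicator (NS T') \<sigma> * G \<sigma>)"
      using AE_not_in[OF Z_null] AE_space
    proof eventually_elim
      fix \<sigma> assume nz: "\<sigma> \<notin> Z" and s: "\<sigma> \<in> space \<mu>"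
      have iff: "(\<sigma> \<in> NS T \<and> occurring m A \<sigma> = S) \<longleftrightarrow> (\<sigma> \<in> AS S \<and> \<sigma> \<in> NS T')"
      proof
        assume a: "\<sigma> \<in> NS T \<and> occurring m A \<sigma> = S"
        then have "\<sigma> \<in> AS S" using s by (auto simp: AS_def occurring_def)
        moreover have "\<sigma> \<in> NS T'" using a s ST' by (auto simp: NS_def occurring_def)
        ultimately show "\<sigma> \<in> AS S \<and> \<sigma> \<in> NS T'" by simp
      next
        assume a: "\<sigma> \<in> AS S \<and> \<sigma> \<in> NS T'"
        have occ: "occurring m A \<sigma> = S"
        proof
          show "S \<subseteq> occurring m A \<sigma>" using a Sm by (auto simp: AS_def occurring_def)
          show "occurring m A \<sigma> \<subseteq> S"
          proof
            fix j assume j: "j \<in> occurring m A \<sigma>"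
            then have jm: "j < m" "\<sigma> \<in> A j" by (auto simp: occurring_def)
            then have "j \<in> T'" using a by (auto simp: NS_def)
            show "j \<in> S"
            proof (rule ccontr)
              assume "j \<notin> S"
              with \<open>j \<in> T'\<close> obtain i where i: "i \<in> S" "adj vbl i j" by (auto simp: T'_def Gamma_plus_def)
              then have "i < m" "\<sigma> \<in> A i" using a Sm by (auto simp: AS_def)
              then have "\<sigma> \<in> Z" using i jm by (auto simp: Z_def)
              with nz show False by simp
            qed
          qed
        qed
        moreover have "\<sigma> \<in> NS T" using occ s ST by (auto simp: NS_def occurring_def)
        ultimately show "\<sigma> \<in> NS T \<and> occurring m A \<sigma> = S" by simp
      qed
      show "indicator (NS T) \<sigma> * traj \<mu> m A vbl \<sigma> (S # Ss) I = indicator (AS S) \<sigma> * (indicator (NS T') \<sigma> * G \<sigma>)"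
        unfolding traj_eq using iff by (auto simp: indicator_def)
    qed
  qed
  have step2: "(\<integral>\<^sup>+\<sigma>. indicator (AS S) \<sigma> * (indicator (NS T') \<sigma> * G \<sigma>) \<partial>\<mu>)
      = emeasure \<mu> (AS S) * (\<integral>\<^sup>+\<sigma>. indicator (NS T') \<sigma> * G \<sigma> \<partial>\<mu>)"
  proof -
    have "(\<integral>\<^sup>+\<sigma>. indicator (AS S) \<sigma> * (indicator (NS T') \<sigma> * G \<sigma>) \<partial>\<mu>)
      = (\<integral>\<^sup>+\<sigma>. indicator (AS S) \<sigma> \<partial>\<mu>) * (\<integral>\<^sup>+\<sigma>. indicator (NS T') \<sigma> * G \<sigma> \<partial>\<mu>)"
    proof (rule split_indep[where V=V])
      show "indicator (AS S) \<in> borel_measurable \<mu>" using AS_sets[OF Sm] by simp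
      show "(\<lambda>\<sigma>. indicator (NS T') \<sigma> * G \<sigma>) \<in> borel_measurable \<mu>" using NS_sets Gm by simp
      fix \<sigma> \<sigma>' assume s: "\<sigma> \<in> space \<mu>" "\<sigma>' \<in> space \<mu>"
      {
        assume ag: "\<forall>k\<in>V. \<sigma> k = \<sigma>' k"
        have "\<forall>i\<in>S. (\<sigma> \<in> A i \<longleftrightarrow> \<sigma>' \<in> A i)"
        proof
          fix i assume i: "i \<in> S"
          then have "\<forall>k\<in>vbl i. \<sigma> k = \<sigma>' k" using ag by (auto simp: V_def)
          then show "\<sigma> \<in> A i \<longleftrightarrow> \<sigma>' \<in> A i" using A_det[OF _ s] i Sm by auto
        qed
        then have "\<sigma> \<in> AS S \<longleftrightarrow> \<sigma>' \<in> AS S" using s by (auto simp: AS_def)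
        then show "indicator (AS S) \<sigma> = (indicator (AS S) \<sigma>' :: ennreal)" by (simp add: indicator_def)
      next
        assume ag: "\<forall>k. k \<notin> V \<longrightarrow> \<sigma> k = \<sigma>' k"
        have "resample \<sigma> V = resample \<sigma>' V" using ag by (auto simp: resample_def fun_eq_iff)
        then have "G \<sigma> = G \<sigma>'" by (simp add: G_def)
        then show "indicator (NS T') \<sigma> * G \<sigma> = indicator (NS T') \<sigma>' * G \<sigma>'"
          using Ndep[OF s ag] by simp
      }
    qed
    then show ?thesis using AS_sets[OF Sm] by simp
  qed
  have step3: "(\<integral>\<^sup>+\<sigma>. indicator (NS T') \<sigma> * G \<sigma> \<partial>\<mu>) = (\<integral>\<^sup>+\<sigma>. indicator (NS T') \<sigma> * traj \<mu> m A vbl \<sigma> Ss I \<partial>\<mu>)"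
  proof -
    let ?R = "\<lambda>x. resample (fst x) V (snd x)"
    let ?h = "\<lambda>\<sigma>. traj \<mu> m A vbl \<sigma> Ss I"
    have R[measurable]: "?R \<in> measurable (\<mu> \<Otimes>\<^sub>M \<mu>) \<mu>" by (rule resample_meas)
    have h[measurable]: "?h \<in> borel_measurable \<mu>" by (rule traj_meas)
    have hR: "(\<lambda>x. ?h (?R x)) \<in> borel_measurable (\<mu> \<Otimes>\<^sub>M \<mu>)"
      using measurable_comp[OF R h] by (simp add: comp_def)
    have N[measurable]: "NS T' \<in> sets \<mu>" by (rule NS_sets)
    have "(\<integral>\<^sup>+\<sigma>. indicator (NS T') \<sigma> * G \<sigma> \<partial>\<mu>) = (\<integral>\<^sup>+\<sigma>. \<integral>\<^sup>+\<tau>. indicator (NS T') \<sigma> * ?h (resample \<sigma> V \<tau>) \<partial>\<mu> \<partial>\<mu>)"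
    proof (rule nn_integral_cong)
      fix \<sigma> assume s: "\<sigma> \<in> space \<mu>"
      have "(\<lambda>\<tau>. ?h (?R (\<sigma>, \<tau>))) \<in> borel_measurable \<mu>"
        by (rule measurable_compose_Pair1[OF s hR])
      then show "indicator (NS T') \<sigma> * G \<sigma> = (\<integral>\<^sup>+\<tau>. indicator (NS T') \<sigma> * ?h (resample \<sigma> V \<tau>) \<partial>\<mu>)"
        unfolding G_def by (simp add: nn_integral_cmult)
    qed
    also have "\<dots> = (\<integral>\<^sup>+x. indicator (NS T') (fst x) * ?h (?R x) \<partial>(\<mu> \<Otimes>\<^sub>M \<mu>))"
      using sigma_finite_measure.nn_integral_fst[OF SF, where f="\<lambda>x. indicator (NS T') (fst x) * ?h (?R x)", of \<mu>]
        hR by simp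
    also have "\<dots> = (\<integral>\<^sup>+x. indicator (NS T') (?R x) * ?h (?R x) \<partial>(\<mu> \<Otimes>\<^sub>M \<mu>))"
    proof (rule nn_integral_cong)
      fix x assume x: "x \<in> space (\<mu> \<Otimes>\<^sub>M \<mu>)"
      then have s: "fst x \<in> space \<mu>" "snd x \<in> space \<mu>" by (auto simp: space_pair_measure)
      then have r: "?R x \<in> space \<mu>" by (rule resample_space)
      have "indicator (NS T') (?R x) = (indicator (NS T') (fst x) :: ennreal)"
        by (rule Ndep[OF r s(1)]) (simp add: resample_def)
      then show "indicator (NS T') (fst x) * ?h (?R x) = indicator (NS T') (?R x) * ?h (?R x)" by simp
    qed
    also have "\<dots> = (\<integral>\<^sup>+\<sigma>. indicator (NS T') \<sigma> * ?h \<sigma> \<partial>distr (\<mu> \<Otimes>\<^sub>M \<mu>) \<mu> ?R)"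
      by (rule nn_integral_distr[symmetric]) (rule R, measurable)
    also have "\<dots> = (\<integral>\<^sup>+\<sigma>. indicator (NS T') \<sigma> * ?h \<sigma> \<partial>\<mu>)"
      by (simp add: resample_distr)
    finally show ?thesis .
  qed
  have step4: "(\<integral>\<^sup>+\<sigma>. indicator (NS T') \<sigma> * traj \<mu> m A vbl \<sigma> Ss I \<partial>\<mu>)
      = ennreal (p_seq (\<lambda>i. measure \<mu> (A i)) Ss) * emeasure \<mu> {\<sigma> \<in> space \<mu>. occurring m A \<sigma> = I}"
    using Cons.IH[OF seq Cons.prems(2) c3[folded T'_def] c4] by (cases Ss) (auto simp: T'_def)
  have ASp: "emeasure \<mu> (AS S) = ennreal (\<Prod>i\<in>S. measure \<mu> (A i))"
    using AS_prod[OF Sind] Sm by (simp add: P.emeasure_eq_measure prod_ennreal)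
  show ?case
    using step1 step2 step3 step4 ASp p_seq_nonneg[of Ss]
    by (simp add: p_seq_def ennreal_mult' mult.assoc prod_nonneg)
qed

end



context LLL2 begin

lemma IE:
  assumes "finite R" "B \<in> sets \<mu>" "\<forall>j\<in>R. A j \<in> sets \<mu>"
  shows "measure \<mu> (B - \<Union>(A ` R)) = (\<Sum>J\<in>Pow R. (-1) ^ card J * measure \<mu> (B \<inter> \<Inter>(A ` J)))"
  using assms
proof (induction R arbitrary: B rule: finite_induct)
  case empty
  then show ?case by simp
next
  case (insert r R)
  have Ar: "A r \<in> sets \<mu>" using insert.prems by simp
  have AR: "\<forall>j\<in>R. A j \<in> sets \<mu>" using insert.prems by simp
  have UR: "\<Union>(A ` R) \<in> sets \<mu>" using AR insert.hyps by (intro sets.finite_UN) auto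
  have "B - \<Union>(A ` insert r R) = (B - \<Union>(A ` R)) - ((B \<inter> A r) - \<Union>(A ` R))" by auto
  then have "measure \<mu> (B - \<Union>(A ` insert r R)) = measure \<mu> (B - \<Union>(A ` R)) - measure \<mu> ((B \<inter> A r) - \<Union>(A ` R))"
    using insert.prems Ar UR by (simp add: P.finite_measure_Diff sets.Diff sets.Int Diff_mono)
  also have "\<dots> = (\<Sum>J\<in>Pow R. (-1) ^ card J * measure \<mu> (B \<inter> \<Inter>(A ` J)))
       - (\<Sum>J\<in>Pow R. (-1) ^ card J * measure \<mu> ((B \<inter> A r) \<inter> \<Inter>(A ` J)))"
    using insert.IH[of B] insert.IH[of "B \<inter> A r"] insert.prems Ar AR by auto
  also have "\<dots> = (\<Sum>J\<in>Pow R. (-1) ^ card J * measure \<mu> (B \<inter> \<Inter>(A ` J)))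
       + (\<Sum>J\<in>insert r ` Pow R. (-1) ^ card J * measure \<mu> (B \<inter> \<Inter>(A ` J)))"
  proof -
    have inj: "inj_on (insert r) (Pow R)" using insert.hyps
      by (auto simp: inj_on_def)
    have "(\<Sum>J\<in>insert r ` Pow R. (-1) ^ card J * measure \<mu> (B \<inter> \<Inter>(A ` J)))
        = (\<Sum>J\<in>Pow R. (-1) ^ card (insert r J) * measure \<mu> (B \<inter> \<Inter>(A ` insert r J)))"
      by (rule sum.reindex[OF inj, unfolded comp_def])
    also have "\<dots> = (\<Sum>J\<in>Pow R. - ((-1) ^ card J * measure \<mu> ((B \<inter> A r) \<inter> \<Inter>(A ` J))))"
    proof (rule sum.cong)
      fix J assume J: "J \<in> Pow R"
      then have "finite J" "r \<notin> J" using insert.hyps finite_subset by auto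
      then have "card (insert r J) = Suc (card J)" by simp
      moreover have "B \<inter> \<Inter>(A ` insert r J) = (B \<inter> A r) \<inter> \<Inter>(A ` J)" by auto
      ultimately show "(-1) ^ card (insert r J) * measure \<mu> (B \<inter> \<Inter>(A ` insert r J))
          = - ((-1) ^ card J * measure \<mu> ((B \<inter> A r) \<inter> \<Inter>(A ` J)))" by simp
    qed simp
    finally show ?thesis by (simp add: sum_negf)
  qed
  also have "\<dots> = (\<Sum>J\<in>Pow (insert r R). (-1) ^ card J * measure \<mu> (B \<inter> \<Inter>(A ` J)))"
    unfolding Pow_insert
    by (rule sum.union_disjoint[symmetric]) (use insert.hyps in auto)
  finally show ?case .
qed

lemma occ_prob:
  assumes I: "Defs.indep_set m vbl I"
  shows "measure \<mu> {\<sigma> \<in> space \<mu>. occurring m A \<sigma> = I} = q_coef m vbl (\<lambda>i. measure \<mu> (A i)) I"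
proof -
  have Im: "I \<subseteq> {..<m}" using I by (simp add: Defs.indep_set_def)
  define R where "R = {..<m} - I"
  have fR: "finite R" by (simp add: R_def)
  have occ: "{\<sigma> \<in> space \<mu>. occurring m A \<sigma> = I} = AS I - \<Union>(A ` R)"
    using Im by (auto simp: occurring_def AS_def R_def)
  have "measure \<mu> (AS I - \<Union>(A ` R)) = (\<Sum>J\<in>Pow R. (-1) ^ card J * measure \<mu> (AS I \<inter> \<Inter>(A ` J)))"
    by (rule IE[OF fR AS_sets[OF Im]]) (auto simp: R_def A_meas)
  also have "\<dots> = (\<Sum>J\<in>Pow R. (\<lambda>J. (-1) ^ (card J - card I) * measure \<mu> (AS J)) (I \<union> J))"
  proof (rule sum.cong)
    fix J assume J: "J \<in> Pow R"
    then have "finite J" "I \<inter> J = {}" using fR finite_subset by (auto simp: R_def)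
    moreover have "finite I" using Im finite_subset by auto
    ultimately have "card (I \<union> J) - card I = card J" by (simp add: card_Un_disjoint)
    moreover have "AS I \<inter> \<Inter>(A ` J) = AS (I \<union> J)" by (auto simp: AS_def)
    ultimately show "(-1) ^ card J * measure \<mu> (AS I \<inter> \<Inter>(A ` J))
        = (\<lambda>J. (-1) ^ (card J - card I) * measure \<mu> (AS J)) (I \<union> J)" by simp
  qed simp
  also have "\<dots> = (\<Sum>J\<in>{J. I \<subseteq> J \<and> J \<subseteq> {..<m}}. (-1) ^ (card J - card I) * measure \<mu> (AS J))"
  proof (rule sum.reindex_bij_betw)
    show "bij_betw ((\<union>) I) (Pow R) {J. I \<subseteq> J \<and> J \<subseteq> {..<m}}"
      by (rule bij_betw_byWitness[where f'="\<lambda>J. J - I"]) (use Im in \<open>auto simp: R_def\<close>)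
  qed
  also have "\<dots> = (\<Sum>J\<in>{J. Defs.indep_set m vbl J \<and> I \<subseteq> J}. (-1) ^ (card J - card I) * (\<Prod>i\<in>J. measure \<mu> (A i)))"
  proof (rule sum.mono_neutral_cong_right)
    show "finite {J. I \<subseteq> J \<and> J \<subseteq> {..<m}}" by (rule finite_subset[of _ "Pow {..<m}"]) auto
    show "{J. Defs.indep_set m vbl J \<and> I \<subseteq> J} \<subseteq> {J. I \<subseteq> J \<and> J \<subseteq> {..<m}}"
      by (auto simp: Defs.indep_set_def)
    show "\<forall>J\<in>{J. I \<subseteq> J \<and> J \<subseteq> {..<m}} - {J. Defs.indep_set m vbl J \<and> I \<subseteq> J}.
        (-1) ^ (card J - card I) * measure \<mu> (AS J) = 0"
    proof
      fix J assume "J \<in> {J. I \<subseteq> J \<and> J \<subseteq> {..<m}} - {J. Defs.indep_set m vbl J \<and> I \<subseteq> J}"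
      then have "J \<subseteq> {..<m}" "\<not> Defs.indep_set m vbl J" by auto
      then have "emeasure \<mu> (AS J) = 0" by (rule AS_null)
      then have "measure \<mu> (AS J) = 0" by (simp add: measure_def)
      then show "(-1) ^ (card J - card I) * measure \<mu> (AS J) = 0" by simp
    qed
    fix J assume "J \<in> {J. Defs.indep_set m vbl J \<and> I \<subseteq> J}"
    then have J: "Defs.indep_set m vbl J" "J \<subseteq> {..<m}" by (auto simp: Defs.indep_set_def)
    have "emeasure \<mu> (AS J) = ennreal (\<Prod>i\<in>J. measure \<mu> (A i))"
      using AS_prod[OF J(1)] J(2) A_meas by (auto simp: P.emeasure_eq_measure prod_ennreal)
    then have "measure \<mu> (AS J) = (\<Prod>i\<in>J. measure \<mu> (A i))"
      by (simp add: measure_def prod_nonneg)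
    then show "(-1) ^ (card J - card I) * measure \<mu> (AS J) = (-1) ^ (card J - card I) * (\<Prod>i\<in>J. measure \<mu> (A i))"
      by simp
  qed
  finally show ?thesis using occ by (simp add: q_coef_def)
qed

end



theorem lemma9:
  fixes n m :: nat
    and M :: "nat \<Rightarrow> 'a measure"
    and A :: "nat \<Rightarrow> (nat \<Rightarrow> 'a) set"
    and vbl :: "nat \<Rightarrow> nat set"
    and I :: "nat set"
    and Ss :: "nat set list"
  assumes M_prob: "\<And>k. k < n \<Longrightarrow> prob_space (M k)"
    and A_meas: "\<And>i. i < m \<Longrightarrow> A i \<in> sets (PiM {..<n} M)"
    and vbl_sub: "\<And>i. i < m \<Longrightarrow> vbl i \<subseteq> {..<n}"
    and A_det: "\<And>i \<sigma> \<tau>. i < m \<Longrightarrow> \<sigma> \<in> space (PiM {..<n} M) \<Longrightarrow> \<tau> \<in> space (PiM {..<n} M) \<Longrightarrow>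
                   (\<forall>k\<in>vbl i. \<sigma> k = \<tau> k) \<Longrightarrow> (\<sigma> \<in> A i \<longleftrightarrow> \<tau> \<in> A i)"
    and disj: "\<And>i j. i < m \<Longrightarrow> j < m \<Longrightarrow> adj vbl i j \<Longrightarrow> measure (PiM {..<n} M) (A i \<inter> A j) = 0"
    and I_indep: "indep_set m vbl I"
    and Ss_seq: "indep_set_seq m vbl Ss"
    and Ss_ne: "Ss \<noteq> []"
    and I_sub: "I \<subseteq> Gamma_plus m vbl (last Ss)"
  shows "run_prob (PiM {..<n} M) m A vbl Ss I
           = q_coef m vbl (\<lambda>i. measure (PiM {..<n} M) (A i)) I
             * p_seq (\<lambda>i. measure (PiM {..<n} M) (A i)) Ss"
proof -
  define M' where "M' k = (if k < n then M k else return (count_space UNIV) undefined)" for k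
  have eq: "PiM {..<n} M = PiM {..<n} M'"
    by (rule PiM_cong) (auto simp: M'_def)
  have pM': "prob_space (M' k)" for k
    by (cases "k < n") (auto simp: M'_def M_prob prob_space_return)
  interpret L: LLL2 M' "{..<n}" m A vbl
  proof unfold_locales
    fix i
    interpret pi: prob_space "M' i" by (rule pM')
    show "\<exists>A. countable A \<and> A \<subseteq> sets (M' i) \<and> \<Union> A = space (M' i) \<and> (\<forall>a\<in>A. emeasure (M' i) a \<noteq> \<infinity>)"
      by (rule exI[of _ "{space (M' i)}"]) simp
    show "emeasure (M' i) (space (M' i)) \<noteq> \<top>" by simp
    show "emeasure (M' i) (space (M' i)) = 1" by (rule pi.emeasure_space_1)
  next
    show "finite {..<n::nat}" by simp
  next
    fix i assume "i < m" then show "A i \<in> sets (Pi\<^sub>M {..<n} M')" using A_meas eq by metis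
  next
    fix i assume "i < m" then show "vbl i \<subseteq> {..<n}" by (rule vbl_sub)
  next
    fix i \<sigma> \<tau> assume "i < m" "\<sigma> \<in> space (Pi\<^sub>M {..<n} M')" "\<tau> \<in> space (Pi\<^sub>M {..<n} M')" "\<forall>k\<in>vbl i. \<sigma> k = \<tau> k"
    then show "(\<sigma> \<in> A i) = (\<tau> \<in> A i)" using A_det eq by metis
  next
    fix i j assume "i < m" "j < m" "adj vbl i j"
    then show "measure (Pi\<^sub>M {..<n} M') (A i \<inter> A j) = 0" using disj eq by metis
  qed
  have c3: "case Ss of [] \<Rightarrow> I \<subseteq> {..<m} | S # _ \<Rightarrow> S \<subseteq> {..<m}"
  proof -
    obtain S rest where Ss: "Ss = S # rest" using Ss_ne by (cases Ss) auto
    have "S \<subseteq> {..<m}" using Ss_seq unfolding Ss by (cases rest) (auto simp: indep_set_def)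
    then show ?thesis by (simp add: Ss)
  qed
  have NS: "L.NS {..<m} = space (PiM {..<n} M')" by (auto simp: L.NS_def)
  have "(\<integral>\<^sup>+\<sigma>. traj (PiM {..<n} M') m A vbl \<sigma> Ss I \<partial>PiM {..<n} M')
      = (\<integral>\<^sup>+\<sigma>. indicator (L.NS {..<m}) \<sigma> * traj (PiM {..<n} M') m A vbl \<sigma> Ss I \<partial>PiM {..<n} M')"
    by (rule nn_integral_cong) (simp add: NS)
  also have "\<dots> = ennreal (p_seq (\<lambda>i. measure (PiM {..<n} M') (A i)) Ss)
       * emeasure (PiM {..<n} M') {\<sigma> \<in> space (PiM {..<n} M'). occurring m A \<sigma> = I}"
    by (rule L.main[OF Ss_seq I_indep c3]) (use I_sub in simp)
  also have "\<dots> = ennreal (p_seq (\<lambda>i. measure (PiM {..<n} M') (A i)) Ss)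
       * ennreal (q_coef m vbl (\<lambda>i. measure (PiM {..<n} M') (A i)) I)"
    using L.occ_prob[OF I_indep] L.occ_sets by (simp add: L.P.emeasure_eq_measure)
  finally have "(\<integral>\<^sup>+\<sigma>. traj (PiM {..<n} M') m A vbl \<sigma> Ss I \<partial>PiM {..<n} M') = \<dots>" .
  moreover have "q_coef m vbl (\<lambda>i. measure (PiM {..<n} M') (A i)) I \<ge> 0"
    using L.occ_prob[OF I_indep] by (metis measure_nonneg)
  moreover have "p_seq (\<lambda>i. measure (PiM {..<n} M') (A i)) Ss \<ge> 0" by (rule L.p_seq_nonneg)
  ultimately show ?thesis
    by (simp add: run_prob_def eq ennreal_mult'[symmetric] enn2real_mult mult.commute)
qed


end
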